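(* Let $\kappa$ be an infinite cardinal, $\mathcal{U}$ a superfine ultrafilter on $\kappa$, and consider the ring of Euclidean integers $\mathbb{Z}^\kappa/\mathcal{U}$ with $\Sigma(\mathbf{x})=[\mathbf{f}_{\mathbf{x}}]_{\mathcal{U}}$. Let $\eta<\kappa$ and let $(x_{\beta\gamma})_{\beta,\gamma<\kappa}$ be integers with $x_{\beta\gamma}=0$ whenever $\beta\ge2^\eta$ or $\gamma\ge2^\eta$. Define the double sum $\sum_{\beta,\gamma}x_{\beta\gamma}=\sum_\varepsilon w_\varepsilon$ where $w_\varepsilon=\sum_{\beta\vee\gamma=\varepsilon}x_{\beta\gamma}$, and define $\mathbf{y}$ by $y_\alpha=x_{\beta\gamma}$ if $\alpha=2^\eta\beta+\gamma$ with $\beta,\gamma<2^\eta$, and $y_\alpha=0$ otherwise. Then $\sum_{\beta,\gamma}x_{\beta\gamma}=\sum_\alpha y_\alpha$.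
   Context: Every ordinal $\alpha$ has a unique base-2 normal form $\alpha=2^{\alpha_1}+\dots+2^{\alpha_n}$ with $\alpha_1>\dots>\alpha_n$; put $L_\alpha=\{\alpha_1,\dots,\alpha_n\}$. Formal inclusion: $\alpha\sqsubseteq\beta$ iff $L_\alpha\subseteq L_\beta$, $\alpha\sqsubset\beta$ iff $L_\alpha\subsetneq L_\beta$. $\alpha\vee\beta$ is the ordinal $\gamma$ with $L_\gamma=L_\alpha\cup L_\beta$. For $\mathbf{x}\in\mathbb{Z}^\kappa$, $\mathbf{f}_{\mathbf{x}}(\alpha)=\sum_{\beta\sqsubseteq\alpha}x_\beta$, and $[\cdot]_{\mathcal U}$ is the class in the ultrapower $\mathbb{Z}^\kappa/\mathcal U$. For $\theta<\kappa$ the cone is $C(\theta)=\{\alpha<\kappa\mid\theta\sqsubset\alpha\}$. For $\eta<\kappa$, $D(\eta)=\{2^{\eta\cdot2}\alpha+2^\eta\xi+\xi\mid \xi<2^\eta,\ \alpha<\kappa\}$ (ordinal arithmetic). An ultrafilter on $\kappa$ is superfine if it contains $D(\eta)\cap C(\theta)$ for all $\eta,\theta<\kappa$ (in particular it contains all cones). *)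

theory Defs
  imports Main
begin

text \<open>The infinite cardinal kappa is represented by a well-ordered type 'k whose order type
  is kappa: elements of 'k are the ordinals below kappa.\<close>

definition inf_card_type :: "'k::wellorder itself \<Rightarrow> bool" where
  "inf_card_type _ \<longleftrightarrow> infinite (UNIV :: 'k set) \<and>
     (\<forall>a::'k. ordLess2 (card_of {..<a}) (card_of (UNIV :: 'k set)))"

definition oiso :: "'a set \<Rightarrow> ('a \<Rightarrow> 'a \<Rightarrow> bool) \<Rightarrow> 'b set \<Rightarrow> ('b \<Rightarrow> 'b \<Rightarrow> bool) \<Rightarrow> bool" where
  "oiso A R B S \<longleftrightarrow> (\<exists>f. bij_betw f A B \<and> (\<forall>x\<in>A. \<forall>y\<in>A. R x y \<longleftrightarrow> S (f x) (f y)))"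

definition ozero :: "'k::wellorder" where
  "ozero = (LEAST x. True)"

fun sum_less :: "'k::wellorder + 'k \<Rightarrow> 'k + 'k \<Rightarrow> bool" where
  "sum_less (Inl x) (Inl y) = (x < y)"
| "sum_less (Inl x) (Inr y) = True"
| "sum_less (Inr x) (Inl y) = False"
| "sum_less (Inr x) (Inr y) = (x < y)"

definition oadd :: "'k::wellorder \<Rightarrow> 'k \<Rightarrow> 'k" where
  "oadd a b = (THE c. oiso {..<c} (<) ({..<a} <+> {..<b}) sum_less)"

text \<open>Ordinal product a*b: order type of b copies of a (anti-lexicographic order).\<close>
definition omul :: "'k::wellorder \<Rightarrow> 'k \<Rightarrow> 'k" where
  "omul a b = (THE c. oiso {..<c} (<) ({..<a} \<times> {..<b})
      (\<lambda>(x1,y1) (x2,y2). y1 < y2 \<or> (y1 = y2 \<and> x1 < x2)))"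

text \<open>Ordinal power 2^a: order type of the finitely supported functions a -> 2 (identified
  with their finite supports), ordered by comparison at the largest point of difference.\<close>
definition oexp2 :: "'k::wellorder \<Rightarrow> 'k" where
  "oexp2 a = (THE c. oiso {..<c} (<) {S. finite S \<and> S \<subseteq> {..<a}}
      (\<lambda>S T. S \<noteq> T \<and> Max ((S - T) \<union> (T - S)) \<in> T))"

fun nf_val :: "'k::wellorder list \<Rightarrow> 'k" where
  "nf_val [] = ozero"
| "nf_val (a # as) = oadd (oexp2 a) (nf_val as)"

definition Lset :: "'k::wellorder \<Rightarrow> 'k set" where
  "Lset a = set (THE xs. sorted_wrt (>) xs \<and> nf_val xs = a)"

definition ojoin :: "'k::wellorder \<Rightarrow> 'k \<Rightarrow> 'k" where
  "ojoin a b = (THE c. Lset c = Lset a \<union> Lset b)"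

definition fvec :: "('k::wellorder \<Rightarrow> int) \<Rightarrow> 'k \<Rightarrow> int" where
  "fvec x a = (\<Sum>b\<in>{b. Lset b \<subseteq> Lset a}. x b)"

definition cone :: "'k::wellorder \<Rightarrow> 'k set" where
  "cone \<theta> = {a. Lset \<theta> \<subset> Lset a}"

definition Dset :: "'k::wellorder \<Rightarrow> 'k set" where
  "Dset \<eta> = {oadd (oadd (omul (oexp2 (oadd \<eta> \<eta>)) a) (omul (oexp2 \<eta>) \<xi>)) \<xi> | \<xi> a.
              \<xi> < oexp2 \<eta>}"

definition is_ultrafilter :: "'a set set \<Rightarrow> bool" where
  "is_ultrafilter U \<longleftrightarrow> UNIV \<in> U \<and> {} \<notin> U \<and> (\<forall>A B. A \<in> U \<longrightarrow> A \<subseteq> B \<longrightarrow> B \<in> U) \<and>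
     (\<forall>A\<in>U. \<forall>B\<in>U. A \<inter> B \<in> U) \<and> (\<forall>A. A \<in> U \<or> - A \<in> U)"

definition superfine :: "'k::wellorder set set \<Rightarrow> bool" where
  "superfine U \<longleftrightarrow> is_ultrafilter U \<and> (\<forall>\<eta> \<theta>. Dset \<eta> \<inter> cone \<theta> \<in> U)"

definition ucls :: "'k set set \<Rightarrow> ('k \<Rightarrow> int) \<Rightarrow> ('k \<Rightarrow> int) set" where
  "ucls U f = {g. {a. f a = g a} \<in> U}"

definition Esum :: "'k::wellorder set set \<Rightarrow> ('k \<Rightarrow> int) \<Rightarrow> ('k \<Rightarrow> int) set" where
  "Esum U x = ucls U (fvec x)"

definition dsum :: "'k::wellorder set set \<Rightarrow> ('k \<Rightarrow> 'k \<Rightarrow> int) \<Rightarrow> ('k \<Rightarrow> int) set" where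
  "dsum U x = Esum U (\<lambda>e. \<Sum>(b, g)\<in>{(b, g). ojoin b g = e}. x b g)"

definition yvec :: "'k::wellorder \<Rightarrow> ('k \<Rightarrow> 'k \<Rightarrow> int) \<Rightarrow> 'k \<Rightarrow> int" where
  "yvec \<eta> x a = (if \<exists>b g. b < oexp2 \<eta> \<and> g < oexp2 \<eta> \<and> a = oadd (omul (oexp2 \<eta>) b) g
     then (THE v. \<exists>b g. b < oexp2 \<eta> \<and> g < oexp2 \<eta> \<and> a = oadd (omul (oexp2 \<eta>) b) g \<and> v = x b g)
     else 0)"

end

theory Submission
  imports Defs "HOL-Library.Multiset_Order"
begin


context begin
notation
  ordLeq2 (infix "<=o" 50) and
  ordLeq3 (infix "\<le>o" 50) and
  ordLess2 (infix "<o" 50) and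
  ordIso2 (infix "=o" 50) and
  card_of ("|_|")

lemma wo_restr: "Well_order {(x::'b::wellorder, y). x \<in> B \<and> y \<in> B \<and> x \<le> y}"
  and field_restr: "Field {(x::'b::wellorder, y). x \<in> B \<and> y \<in> B \<and> x \<le> y} = B"
proof -
  let ?r = "{(x::'b::wellorder, y). x \<in> B \<and> y \<in> B \<and> x \<le> y}"
  show F: "Field ?r = B" unfolding Field_def Domain_def Range_def by auto
  have "wf (?r - Id)"
    by (rule wf_subset[OF wf]) auto
  then show "Well_order ?r" unfolding F
    unfolding well_order_on_def linear_order_on_def partial_order_on_def preorder_on_def
      refl_on_def trans_on_def antisym_on_def total_on_def
    by (auto simp: Field_def)
qed

lemma kl:
  fixes B :: "'b::wellorder set"
  assumes small: "\<forall>y\<in>B. |{z\<in>B. z<y}| <o |UNIV::'k::wellorder set|"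
    and big: "\<not> |B| <o |UNIV::'k set|"
    and smallk: "\<forall>a::'k. |{..<a}| <o |UNIV::'k set|"
  shows "\<exists>f::'k\<Rightarrow>'b. bij_betw f UNIV B \<and> (\<forall>a b. a < b \<longleftrightarrow> f a < f b)"
proof -
  define r where "r = {(x::'k, y). x \<in> UNIV \<and> y \<in> UNIV \<and> x \<le> y}"
  define r' where "r' = {(x::'b, y). x \<in> B \<and> y \<in> B \<and> x \<le> y}"
  have wr: "Well_order r" "Field r = UNIV" unfolding r_def using wo_restr field_restr by blast+
  have wr': "Well_order r'" "Field r' = B" unfolding r'_def using wo_restr field_restr by blast+
  have usr: "underS r a = {..<a}" for a unfolding underS_def r_def by auto
  have usr': "y \<in> B \<Longrightarrow> underS r' y = {z\<in>B. z<y}" for y unfolding underS_def r'_def by auto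
  from wellorders_totally_ordered[OF wr(1) wr'(1)]
  show ?thesis
  proof
    assume "\<exists>f. embed r r' f"
    then obtain f where e: "embed r r' f" by blast
    then have c: "compat r r' f" and i: "inj f" and o: "wo_rel.ofilter r' (f ` UNIV)"
      using embed_iff_compat_inj_on_ofilter[OF wr(1) wr'(1)] wr by auto
    have img: "f ` UNIV = B"
    proof (rule ccontr)
      assume ne: "f ` UNIV \<noteq> B"
      from o wo_rel.ofilter_underS_Field[of r'] wr' ne obtain y where y: "y \<in> B" "f ` UNIV = underS r' y"
        unfolding wo_rel_def by auto
      have "|UNIV::'k set| =o |f ` UNIV|" using i card_of_ordIso by (metis bij_betw_imageI)
      moreover have "|f ` UNIV| <o |UNIV::'k set|" using y usr' small by auto
      ultimately show False using ordIso_ordLess_trans ordLess_irreflexive by blast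
    qed
    have mono: "a \<le> b \<Longrightarrow> f a \<le> f b" for a b using c unfolding compat_def r_def r'_def by auto
    have "\<forall>a b. a < b \<longleftrightarrow> f a < f b"
      by (metis i inj_eq le_less mono not_le)
    with img i show ?thesis unfolding bij_betw_def by blast
  next
    assume "\<exists>g. embed r' r g"
    then obtain g where e: "embed r' r g" by blast
    then have c: "compat r' r g" and i: "inj_on g B" and o: "wo_rel.ofilter r (g ` B)"
      using embed_iff_compat_inj_on_ofilter[OF wr'(1) wr(1)] wr' by auto
    have img: "g ` B = UNIV"
    proof (rule ccontr)
      assume ne: "g ` B \<noteq> UNIV"
      from o wo_rel.ofilter_underS_Field[of r] wr ne obtain y where y: "g ` B = {..<y}"
        unfolding wo_rel_def usr by auto
      have "|B| =o |g ` B|" using i card_of_ordIso by (metis bij_betw_imageI)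
      moreover have "|g ` B| <o |UNIV::'k set|" using y smallk by auto
      ultimately show False using ordIso_ordLess_trans big by blast
    qed
    have mono: "a \<in> B \<Longrightarrow> b \<in> B \<Longrightarrow> a \<le> b \<Longrightarrow> g a \<le> g b" for a b
      using c unfolding compat_def r_def r'_def by auto
    have bg: "bij_betw g B UNIV" using i img by (simp add: bij_betw_def)
    define f where "f = inv_into B g"
    have bf: "bij_betw f UNIV B" unfolding f_def using bij_betw_inv_into[OF bg] .
    have fB: "f a \<in> B" for a using bf bij_betwE by blast
    have gf: "g (f a) = a" for a unfolding f_def using img by (simp add: f_inv_into_f)
    have "a < b \<longleftrightarrow> f a < f b" for a b
    proof
      assume "a < b" show "f a < f b"
      proof (rule ccontr)
        assume "\<not> f a < f b" then have "f b \<le> f a" by simp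
        then have "g (f b) \<le> g (f a)" using mono fB by blast
        then show False using gf \<open>a < b\<close> by simp
      qed
    next
      assume "f a < f b" then have "g (f a) \<le> g (f b)" using mono fB by (simp add: less_imp_le)
      moreover have "a \<noteq> b" using \<open>f a < f b\<close> by auto
      ultimately show "a < b" using gf by (metis order_le_neq_trans)
    qed
    with bf show ?thesis by blast
  qed
qed

lemma fin_less_inf: "finite A \<Longrightarrow> \<not> finite B \<Longrightarrow> |A| <o |B|"
proof -
  assume a: "finite A" "\<not> finite B"
  have "\<not> |B| \<le>o |A|" using card_of_ordLeq_finite a by blast
  then show ?thesis using not_ordLeq_iff_ordLess[OF card_of_Well_order card_of_Well_order] by blast
qed

lemma lists_len: "\<not> finite C \<Longrightarrow> |{xs. set xs \<subseteq> C \<and> length xs = n}| \<le>o |C|"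
proof (induction n)
  case 0
  have "{xs. set xs \<subseteq> C \<and> length xs = 0} = {[]}" by auto
  moreover have "C \<noteq> {}" using 0 by auto
  ultimately show ?case using card_of_singl_ordLeq by metis
next
  case (Suc n)
  let ?L = "{xs. set xs \<subseteq> C \<and> length xs = n}"
  have "{xs. set xs \<subseteq> C \<and> length xs = Suc n} \<subseteq> (\<lambda>(x,xs). x#xs) ` (C \<times> ?L)"
  proof
    fix xs assume "xs \<in> {xs. set xs \<subseteq> C \<and> length xs = Suc n}"
    then obtain y ys where "xs = y # ys" "y \<in> C" "ys \<in> ?L" by (cases xs) auto
    then show "xs \<in> (\<lambda>(x,xs). x#xs) ` (C \<times> ?L)" by force
  qed
  then have "|{xs. set xs \<subseteq> C \<and> length xs = Suc n}| \<le>o |(\<lambda>(x,xs). x#xs) ` (C \<times> ?L)|"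
    using card_of_mono1 by blast
  also have "|(\<lambda>(x,xs). x#xs) ` (C \<times> ?L)| \<le>o |C \<times> ?L|" by (rule card_of_image)
  also have "|C \<times> ?L| \<le>o |C \<times> C|" using card_of_Times_mono2 Suc by blast
  also have "|C \<times> C| \<le>o |C|" using card_of_Times_same_infinite Suc.prems ordIso_imp_ordLeq by blast
  finally show ?case .
qed

lemma fin_subsets_inf: "\<not> finite C \<Longrightarrow> |{S. S \<subseteq> C \<and> finite S}| \<le>o |C|"
proof -
  assume inf: "\<not> finite C"
  have "{S. S \<subseteq> C \<and> finite S} \<subseteq> set ` (\<Union>n. {xs. set xs \<subseteq> C \<and> length xs = n})"
  proof
    fix S assume "S \<in> {S. S \<subseteq> C \<and> finite S}"
    then have "S \<subseteq> C" "finite S" by auto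
    then obtain xs where "set xs = S" using finite_list by blast
    then show "S \<in> set ` (\<Union>n. {xs. set xs \<subseteq> C \<and> length xs = n})"
      using \<open>S \<subseteq> C\<close> by blast
  qed
  then have "|{S. S \<subseteq> C \<and> finite S}| \<le>o |set ` (\<Union>n. {xs. set xs \<subseteq> C \<and> length xs = n})|"
    using card_of_mono1 by blast
  also have "|set ` (\<Union>n. {xs. set xs \<subseteq> C \<and> length xs = n})| \<le>o |\<Union>n. {xs. set xs \<subseteq> C \<and> length xs = n}|" by (rule card_of_image)
  also have "|\<Union>n. {xs. set xs \<subseteq> C \<and> length xs = n}| \<le>o |C|"
  proof (rule card_of_UNION_ordLeq_infinite[OF inf])
    show "|UNIV::nat set| \<le>o |C|" using infinite_iff_card_of_nat inf by blast
    show "\<forall>i\<in>UNIV. |{xs. set xs \<subseteq> C \<and> length xs = i}| \<le>o |C|" using lists_len[OF inf] by blast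
  qed
  finally show ?thesis .
qed

lemma fin_subsets_small:
  assumes "\<not> finite (UNIV::'k set)" "|C| <o |UNIV::'k set|"
  shows "|{S. S \<subseteq> C \<and> finite S}| <o |UNIV::'k set|"
proof (cases "finite C")
  case True
  then have "finite {S. S \<subseteq> C \<and> finite S}" by simp
  then show ?thesis using fin_less_inf assms by blast
next
  case False
  then show ?thesis using fin_subsets_inf assms ordLeq_ordLess_trans by blast
qed

definition fl :: "'a::linorder set \<Rightarrow> 'a set \<Rightarrow> bool" where
  "fl S T \<longleftrightarrow> S \<noteq> T \<and> Max ((S - T) \<union> (T - S)) \<in> T"

lemma fl_mset:
  fixes S T :: "'a::linorder set"
  assumes "finite S" "finite T"
  shows "fl S T \<longleftrightarrow> mset_set S < mset_set T"
proof -
  have cnt: "count (mset_set X) y = (if y \<in> X then 1 else 0)" if "finite X" for X and y :: 'a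
    using that by (simp add: count_mset_set)
  have eq: "mset_set S = mset_set T \<longleftrightarrow> S = T" using assms by (metis finite_set_mset_mset_set)
  let ?D = "(S - T) \<union> (T - S)"
  have fD: "finite ?D" using assms by auto
  show ?thesis
  proof
    assume f: "fl S T"
    then have ne: "S \<noteq> T" and m: "Max ?D \<in> T" unfolding fl_def by auto
    have Dne: "?D \<noteq> {}" using ne by auto
    show "mset_set S < mset_set T" unfolding less_multiset\<^sub>H\<^sub>O
    proof (intro conjI allI impI)
      show "mset_set S \<noteq> mset_set T" using eq ne by simp
    next
      fix y assume "count (mset_set T) y < count (mset_set S) y"
      then have y: "y \<in> S" "y \<notin> T" unfolding cnt[OF assms(1)] cnt[OF assms(2)] by (auto split: if_splits)
      have "y \<le> Max ?D" using y fD by (intro Max_ge) auto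
      moreover have "Max ?D \<in> ?D" using Max_in[OF fD Dne] .
      ultimately have "y < Max ?D" "Max ?D \<notin> S" using y m by (auto simp: le_less)
      then show "\<exists>x>y. count (mset_set S) x < count (mset_set T) x"
        using m cnt[OF assms(1)] cnt[OF assms(2)] by (intro exI[of _ "Max ?D"]) simp
    qed
  next
    assume l: "mset_set S < mset_set T"
    then have ne: "S \<noteq> T" by auto
    have Dne: "?D \<noteq> {}" using ne by auto
    have mD: "Max ?D \<in> ?D" using Max_in[OF fD Dne] .
    show "fl S T" unfolding fl_def
    proof (intro conjI ne)
      show "Max ?D \<in> T"
      proof (rule ccontr)
        assume "Max ?D \<notin> T"
        then have "Max ?D \<in> S" using mD by auto
        then have "count (mset_set T) (Max ?D) < count (mset_set S) (Max ?D)"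
          using \<open>Max ?D \<notin> T\<close> cnt assms by simp
        then obtain x where x: "x > Max ?D" "count (mset_set S) x < count (mset_set T) x"
          using l unfolding less_multiset\<^sub>H\<^sub>O by blast
        then have "x \<in> ?D" unfolding cnt[OF assms(1)] cnt[OF assms(2)] by (auto split: if_splits)
        then have "x \<le> Max ?D" using fD by simp
        then show False using x by simp
      qed
    qed
  qed
qed

end


lemma fl_fun: "(\<lambda>S T. S \<noteq> T \<and> Max ((S - T) \<union> (T - S)) \<in> T) = fl"
  by (intro ext) (simp add: fl_def)

lemma fl_irrefl: "\<not> fl S S" by (simp add: fl_def)

lemma fl_trans: "finite S \<Longrightarrow> finite T \<Longrightarrow> finite V \<Longrightarrow> fl S T \<Longrightarrow> fl T V \<Longrightarrow> fl S V"
  by (simp add: fl_mset)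

lemma fl_total: "finite S \<Longrightarrow> finite T \<Longrightarrow> S \<noteq> T \<Longrightarrow> fl S T \<or> fl T S"
  by (metis fl_mset finite_set_mset_mset_set neqE)

lemma fl_asym: "finite S \<Longrightarrow> finite T \<Longrightarrow> fl S T \<Longrightarrow> \<not> fl T S"
  by (simp add: fl_mset)

lemma fl_empty: "\<not> fl S {}" by (simp add: fl_def)

lemma fl_empty2: "finite T \<Longrightarrow> T \<noteq> {} \<Longrightarrow> fl {} T"
  by (simp add: fl_def)

lemma fl_below: "finite V \<Longrightarrow> finite Q \<Longrightarrow> fl V Q \<Longrightarrow> v \<in> V \<Longrightarrow> \<exists>q\<in>Q. v \<le> q"
proof -
  assume a: "finite V" "finite Q" "fl V Q" "v \<in> V"
  let ?D = "(V - Q) \<union> (Q - V)"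
  show ?thesis
  proof (cases "v \<in> Q")
    case True then show ?thesis by auto
  next
    case False
    then have "v \<in> ?D" using a by auto
    then have "v \<le> Max ?D" using a by simp
    moreover have "Max ?D \<in> Q" using a unfolding fl_def by auto
    ultimately show ?thesis by auto
  qed
qed

lemma fl_singleton: "finite S \<Longrightarrow> fl S {x} \<longleftrightarrow> S \<subseteq> {..<x}"
proof
  assume a: "finite S" "fl S {x}"
  let ?D = "(S - {x}) \<union> ({x} - S)"
  have m: "Max ?D = x" and ne: "S \<noteq> {x}" using a unfolding fl_def by auto
  have fD: "finite ?D" using a by auto
  have "?D \<noteq> {}" using ne by auto
  then have "x \<in> ?D" using m Max_in[OF fD] by metis
  then have xS: "x \<notin> S" by auto
  show "S \<subseteq> {..<x}"
  proof
    fix s assume "s \<in> S"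
    then have "s \<in> ?D" using xS by auto
    then have "s \<le> x" using m fD by (metis Max_ge)
    then show "s \<in> {..<x}" using \<open>s \<in> S\<close> xS by (auto simp: le_less)
  qed
next
  assume a: "finite S" "S \<subseteq> {..<x}"
  then have xS: "x \<notin> S" by auto
  have D: "(S - {x}) \<union> ({x} - S) = insert x S" using xS by auto
  have "Max (insert x S) = x" using a by (intro Max_eqI) (auto simp: less_imp_le)
  then show "fl S {x}" unfolding fl_def D using xS by auto
qed

lemma fl_split:
  fixes A1 A2 B1 B2 :: "'a::linorder set"
  assumes fin: "finite A1" "finite A2" "finite B1" "finite B2"
    and lo: "\<forall>a\<in>A1 \<union> A2. \<forall>b\<in>B1 \<union> B2. a < b"
  shows "fl (A1 \<union> B1) (A2 \<union> B2) \<longleftrightarrow> fl B1 B2 \<or> (B1 = B2 \<and> fl A1 A2)"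
proof (cases "B1 = B2")
  case True
  have D: "((A1 \<union> B1) - (A2 \<union> B2)) \<union> ((A2 \<union> B2) - (A1 \<union> B1)) = (A1 - A2) \<union> (A2 - A1)"
    using True lo by auto
  have e: "A1 \<union> B1 = A2 \<union> B2 \<longleftrightarrow> A1 = A2" using True lo by blast
  show ?thesis
  proof (cases "A1 = A2")
    case True then show ?thesis using \<open>B1 = B2\<close> by (simp add: fl_def)
  next
    case False
    have fD: "finite ((A1 - A2) \<union> (A2 - A1))" using fin by auto
    have "Max ((A1 - A2) \<union> (A2 - A1)) \<in> (A1 - A2) \<union> (A2 - A1)"
      using Max_in[OF fD] False by auto
    then have "Max ((A1 - A2) \<union> (A2 - A1)) \<in> A2 \<union> B2 \<longleftrightarrow> Max ((A1 - A2) \<union> (A2 - A1)) \<in> A2"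
      using lo \<open>B1 = B2\<close> by blast
    then show ?thesis unfolding fl_def D e using True fl_irrefl by (simp add: fl_def)
  qed
next
  case False
  let ?D = "((A1 \<union> B1) - (A2 \<union> B2)) \<union> ((A2 \<union> B2) - (A1 \<union> B1))"
  let ?E = "(B1 - B2) \<union> (B2 - B1)"
  have fE: "finite ?E" and fD: "finite ?D" using fin by auto
  have Ene: "?E \<noteq> {}" using False by auto
  have mE: "Max ?E \<in> ?E" using Max_in[OF fE Ene] .
  have sub: "?E \<subseteq> ?D" using lo by blast
  have "Max ?D = Max ?E"
  proof (rule Max_eqI[OF fD])
    show "Max ?E \<in> ?D" using mE sub by blast
    fix y assume y: "y \<in> ?D"
    show "y \<le> Max ?E"
    proof (cases "y \<in> ?E")
      case True then show ?thesis using fE by simp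
    next
      case False
      then have "y \<in> A1 \<union> A2" using y by blast
      then have "y < Max ?E" using lo mE by blast
      then show ?thesis by simp
    qed
  qed
  moreover have "Max ?E \<in> A2 \<union> B2 \<longleftrightarrow> Max ?E \<in> B2" using lo mE by blast
  moreover have "A1 \<union> B1 \<noteq> A2 \<union> B2"
  proof
    assume "A1 \<union> B1 = A2 \<union> B2"
    then have "B1 = B2" using lo by blast
    then show False using False by simp
  qed
  ultimately show ?thesis using False unfolding fl_def by auto
qed

lemma fl_mono_image:
  fixes h :: "'a::linorder \<Rightarrow> 'b::linorder"
  assumes mono: "\<And>x y. x < y \<Longrightarrow> h x < h y" and fin: "finite X" "finite Y"
  shows "fl (h ` X) (h ` Y) \<longleftrightarrow> fl X Y"
proof -
  have "strict_mono h" using mono by (simp add: strict_mono_def)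
  then have inj: "inj h" by (rule strict_mono_imp_inj_on)
  have D: "(h ` X - h ` Y) \<union> (h ` Y - h ` X) = h ` ((X - Y) \<union> (Y - X))"
    by (auto dest: injD[OF inj])
  have e: "h ` X = h ` Y \<longleftrightarrow> X = Y" using inj by (simp add: inj_image_eq_iff)
  show ?thesis
  proof (cases "X = Y")
    case True then show ?thesis by (simp add: fl_def)
  next
    case False
    have fD: "finite ((X - Y) \<union> (Y - X))" using fin by auto
    have ne: "(X - Y) \<union> (Y - X) \<noteq> {}" using False by auto
    have "mono h" using mono by (metis monoI le_less)
    then have "Max (h ` ((X - Y) \<union> (Y - X))) = h (Max ((X - Y) \<union> (Y - X)))"
      using mono_Max_commute[OF _ fD ne] by metis
    then show ?thesis unfolding fl_def D e using inj by (simp add: inj_image_mem_iff)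
  qed
qed

lemma fl_union_decomp:
  fixes U P Q :: "'a::linorder set"
  assumes fin: "finite U" "finite P" "finite Q"
    and lo: "\<forall>p\<in>P. \<forall>q\<in>Q. q < p"
    and f: "fl U (P \<union> Q)" and nf: "\<not> fl U P"
  shows "P \<subseteq> U \<and> (\<forall>v\<in>U - P. \<forall>p\<in>P. v < p) \<and> fl (U - P) Q"
proof (cases "U = P")
  case True
  then have "Q \<noteq> {}" using f by (metis Un_empty_right fl_irrefl)
  then show ?thesis using True fl_empty2 fin by auto
next
  case False
  then have fPU: "fl P U" using fl_total fin nf by blast
  let ?D = "(P - U) \<union> (U - P)"
  have fD: "finite ?D" using fin by auto
  have Dne: "?D \<noteq> {}" using False by auto
  define m where "m = Max ?D"
  have mD: "m \<in> ?D" unfolding m_def using Max_in[OF fD Dne] .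
  have mU: "m \<in> U" "m \<notin> P" using fPU mD unfolding fl_def m_def by auto
  have mmax: "\<And>z. z \<in> ?D \<Longrightarrow> z \<le> m" unfolding m_def using fD by simp
  have low: "\<forall>p\<in>P. m < p"
  proof (rule ccontr)
    assume "\<not> (\<forall>p\<in>P. m < p)"
    then obtain p where p: "p \<in> P" "p \<le> m" by (auto simp: not_less)
    have mQ: "\<forall>q\<in>Q. q < m" using lo p by force
    let ?D' = "(U - (P \<union> Q)) \<union> ((P \<union> Q) - U)"
    have fD': "finite ?D'" using fin by auto
    have mD': "m \<in> ?D'" using mU mQ by auto
    have "Max ?D' = m"
    proof (rule Max_eqI[OF fD' _ mD'])
      fix z assume z: "z \<in> ?D'"
      show "z \<le> m"
      proof (rule ccontr)
        assume "\<not> z \<le> m"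
        then have zm: "m < z" by simp
        then have "z \<notin> Q" using mQ by auto
        then have "z \<in> ?D" using z by auto
        then show False using mmax zm by force
      qed
    qed
    then have "\<not> fl U (P \<union> Q)" unfolding fl_def using mU mQ by auto
    then show False using f by simp
  qed
  have PU: "P \<subseteq> U"
  proof
    fix p assume "p \<in> P"
    show "p \<in> U"
    proof (rule ccontr)
      assume "p \<notin> U"
      then have "p \<le> m" using mmax \<open>p \<in> P\<close> by auto
      then show False using low \<open>p \<in> P\<close> by force
    qed
  qed
  have low2: "\<forall>v\<in>U - P. \<forall>p\<in>P. v < p"
  proof (intro ballI)
    fix v p assume "v \<in> U - P" "p \<in> P"
    then have "v \<le> m" using mmax by auto
    then show "v < p" using low \<open>p \<in> P\<close> by force
  qed
  have "fl ((U - P) \<union> P) (Q \<union> P) \<longleftrightarrow> fl P P \<or> (P = P \<and> fl (U - P) Q)"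
    using fin lo low2 by (intro fl_split) auto
  then have "fl ((U - P) \<union> P) (Q \<union> P) \<longleftrightarrow> fl (U - P) Q" using fl_irrefl by blast
  moreover have "(U - P) \<union> P = U" "Q \<union> P = P \<union> Q" using PU by auto
  ultimately show ?thesis using PU low2 f by simp
qed


lemma oiso_sym: "oiso A R B S \<Longrightarrow> oiso B S A R"
proof -
  assume "oiso A R B S"
  then obtain f where b: "bij_betw f A B" and o: "\<forall>x\<in>A. \<forall>y\<in>A. R x y \<longleftrightarrow> S (f x) (f y)"
    unfolding oiso_def by blast
  let ?g = "inv_into A f"
  have bg: "bij_betw ?g B A" using bij_betw_inv_into[OF b] .
  have "\<forall>x\<in>B. \<forall>y\<in>B. S x y \<longleftrightarrow> R (?g x) (?g y)"
  proof (intro ballI)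
    fix x y assume "x \<in> B" "y \<in> B"
    moreover have "f ` A = B" using b by (simp add: bij_betw_def)
    ultimately have "?g x \<in> A" "?g y \<in> A" "f (?g x) = x" "f (?g y) = y"
      by (auto intro: inv_into_into f_inv_into_f)
    then show "S x y \<longleftrightarrow> R (?g x) (?g y)" using o by metis
  qed
  then show ?thesis using bg unfolding oiso_def by blast
qed

lemma oiso_trans: "oiso A R B S \<Longrightarrow> oiso B S C T \<Longrightarrow> oiso A R C T"
proof -
  assume "oiso A R B S" "oiso B S C T"
  then obtain f g where b: "bij_betw f A B" and o: "\<forall>x\<in>A. \<forall>y\<in>A. R x y \<longleftrightarrow> S (f x) (f y)"
    and b2: "bij_betw g B C" and o2: "\<forall>x\<in>B. \<forall>y\<in>B. S x y \<longleftrightarrow> T (g x) (g y)"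
    unfolding oiso_def by blast
  have "bij_betw (g \<circ> f) A C" using b b2 bij_betw_trans by blast
  moreover have "\<forall>x\<in>A. \<forall>y\<in>A. R x y \<longleftrightarrow> T ((g \<circ> f) x) ((g \<circ> f) y)"
  proof (intro ballI)
    fix x y assume "x \<in> A" "y \<in> A"
    then have "f x \<in> B" "f y \<in> B" using b bij_betwE by blast+
    then show "R x y \<longleftrightarrow> T ((g \<circ> f) x) ((g \<circ> f) y)"
      using o o2 \<open>x \<in> A\<close> \<open>y \<in> A\<close> by simp
  qed
  ultimately show ?thesis unfolding oiso_def by blast
qed

lemma oiso_intro:
  assumes "f ` A = B" "\<forall>x\<in>A. \<forall>y\<in>A. R x y \<longleftrightarrow> S (f x) (f y)"
    "\<forall>x\<in>A. \<forall>y\<in>A. x \<noteq> y \<longrightarrow> R x y \<or> R y x" "\<forall>x. \<not> S x x"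
  shows "oiso A R B S"
proof -
  have "inj_on f A"
  proof (rule inj_onI)
    fix x y assume "x \<in> A" "y \<in> A" "f x = f y"
    then show "x = y" using assms(2,3,4) by metis
  qed
  then show ?thesis using assms(1,2) unfolding oiso_def bij_betw_def by blast
qed

lemma mono_ge:
  fixes h :: "'k::wellorder \<Rightarrow> 'k"
  assumes m: "\<forall>x<c. \<forall>y<c. x < y \<longrightarrow> h x < h y"
  shows "x < c \<Longrightarrow> x \<le> h x"
proof (induction x rule: less_induct)
  case (less x)
  show ?case
  proof (rule ccontr)
    assume "\<not> x \<le> h x"
    then have hx: "h x < x" by simp
    then have "h x < c" using less.prems by simp
    then have "h x \<le> h (h x)" using less.IH hx by blast
    moreover have "h (h x) < h x" using m hx \<open>h x < c\<close> less.prems by blast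
    ultimately show False by simp
  qed
qed

lemma oiso_seg: "oiso {..<c} (<) {..<c'::'k::wellorder} (<) \<Longrightarrow> c \<le> c'"
proof (rule ccontr)
  assume "oiso {..<c} (<) {..<c'} (<)" "\<not> c \<le> c'"
  then obtain f where b: "bij_betw f {..<c} {..<c'}" and o: "\<forall>x\<in>{..<c}. \<forall>y\<in>{..<c}. x < y \<longleftrightarrow> f x < f y"
    and lt: "c' < c"
    unfolding oiso_def by auto
  have "c' \<le> f c'" using mono_ge[of c f c'] o lt by auto
  moreover have "f c' < c'" using b lt bij_betwE by fastforce
  ultimately show False by simp
qed

lemma oiso_the: "oiso {..<c::'k::wellorder} (<) X R \<Longrightarrow> (THE d::'k. oiso {..<d} (<) X R) = c"
proof -
  assume a: "oiso {..<c} (<) X R"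
  show ?thesis
  proof (rule the_equality)
    show "oiso {..<c} (<) X R" using a .
  next
    fix c' :: 'k assume b: "oiso {..<c'} (<) X R"
    have "oiso {..<c} (<) {..<c'} (<)" using oiso_trans[OF a oiso_sym[OF b]] .
    moreover have "oiso {..<c'} (<) {..<c} (<)" using oiso_trans[OF b oiso_sym[OF a]] .
    ultimately show "c' = c" using oiso_seg by (metis order_antisym)
  qed
qed

context begin
notation
  ordLeq2 (infix "<=o" 50) and
  ordLeq3 (infix "\<le>o" 50) and
  ordLess2 (infix "<o" 50) and
  ordIso2 (infix "=o" 50) and
  card_of ("|_|")

lemma ict: "inf_card_type TYPE('k::wellorder) \<Longrightarrow> \<not> finite (UNIV::'k set) \<and> (\<forall>a::'k. |{..<a}| <o |UNIV::'k set| )"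
  unfolding inf_card_type_def by simp

lemma Phi_big:
  "\<not> |mset_set ` {S::'k set. finite S}| <o |UNIV::'k set|"
proof -
  have "inj_on (\<lambda>a::'k. mset_set {a}) UNIV \<and> (\<lambda>a. mset_set {a}) ` UNIV \<subseteq> mset_set ` {S::'k set. finite S}"
    by (auto simp: inj_on_def intro!: image_eqI[where x="{_}"])
  then have "|UNIV::'k set| \<le>o |mset_set ` {S::'k set. finite S}|" using card_of_ordLeq by blast
  then show ?thesis using not_ordLess_ordLeq by blast
qed

lemma Phi_small_sub:
  fixes T :: "'k::linorder set"
  assumes T: "finite T" "T \<noteq> {}"
  shows "{z\<in>mset_set ` {S::'k set. finite S}. z < mset_set T} \<subseteq> mset_set ` {S. S \<subseteq> {..<Max T} \<union> {Max T} \<and> finite S}"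
proof
  fix z assume "z \<in> {z\<in>mset_set ` {S::'k set. finite S}. z < mset_set T}"
  then obtain S where S: "finite S" "z = mset_set S" "mset_set S < mset_set T"
    by auto
  then have "fl S T" using fl_mset T by blast
  have "S \<subseteq> {..<Max T} \<union> {Max T}"
  proof
    fix s assume "s \<in> S"
    then obtain q where "q \<in> T" "s \<le> q" using fl_below[OF S(1) T(1) \<open>fl S T\<close>] by blast
    then have "s \<le> Max T" using T(1) Max_ge order.trans by blast
    then show "s \<in> {..<Max T} \<union> {Max T}" by (auto simp: le_less)
  qed
  then show "z \<in> mset_set ` {S. S \<subseteq> {..<Max T} \<union> {Max T} \<and> finite S}" using S by auto
qed

lemma Phi_small:
  assumes inf: "\<not> finite (UNIV::'k::wellorder set)" and sk: "\<forall>a::'k. |{..<a}| <o |UNIV::'k set|"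
  shows "\<forall>y\<in>mset_set ` {S::'k set. finite S}. |{z\<in>mset_set ` {S::'k set. finite S}. z<y}| <o |UNIV::'k set|"
proof
  fix y assume "y \<in> mset_set ` {S::'k set. finite S}"
  then obtain T where T: "finite T" "y = mset_set T" by auto
  show "|{z\<in>mset_set ` {S::'k set. finite S}. z<y}| <o |UNIV::'k set|"
  proof (cases "T = {}")
    case True
    then have e: "{z\<in>mset_set ` {S::'k set. finite S}. z<y} = {}" using T by auto
    have "|{}::'k multiset set| <o |UNIV::'k set|" using fin_less_inf[OF _ inf] by blast
    then show ?thesis unfolding e .
  next
    case False
    define C where "C = {..<Max T} \<union> {Max T}"
    have "|{Max T}| <o |UNIV::'k set|" by (rule fin_less_inf[OF _ inf]) simp
    then have "|C| <o |UNIV::'k set|" unfolding C_def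
      by (rule card_of_Un_ordLess_infinite[OF inf sk[rule_format]])
    then have fs: "|{S. S \<subseteq> C \<and> finite S}| <o |UNIV::'k set|" by (rule fin_subsets_small[OF inf])
    have "|{z\<in>mset_set ` {S::'k set. finite S}. z<y}| \<le>o |mset_set ` {S. S \<subseteq> C \<and> finite S}|"
      unfolding T(2) C_def by (rule card_of_mono1[OF Phi_small_sub[OF T(1) False]])
    moreover have "|mset_set ` {S. S \<subseteq> C \<and> finite S}| \<le>o |{S. S \<subseteq> C \<and> finite S}|"
      by (rule card_of_image)
    ultimately have "|{z\<in>mset_set ` {S::'k set. finite S}. z<y}| \<le>o |{S. S \<subseteq> C \<and> finite S}|"
      by (rule ordLeq_transitive)
    then show ?thesis by (rule ordLeq_ordLess_trans[OF _ fs])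
  qed
qed

lemma Phi_ex:
  assumes "inf_card_type TYPE('k::wellorder)"
  shows "\<exists>\<Phi>::'k \<Rightarrow> 'k set. bij_betw \<Phi> UNIV {S. finite S} \<and> (\<forall>a b. a < b \<longleftrightarrow> fl (\<Phi> a) (\<Phi> b))"
proof -
  have inf: "\<not> finite (UNIV::'k set)" and sk: "\<forall>a::'k. |{..<a}| <o |UNIV::'k set|"
    using ict[OF assms] by auto
  obtain f :: "'k \<Rightarrow> 'k multiset" where f: "bij_betw f UNIV (mset_set ` {S::'k set. finite S})" "\<forall>a b. a < b \<longleftrightarrow> f a < f b"
    using kl[OF Phi_small[OF inf sk] Phi_big sk] by blast
  define \<Phi> where "\<Phi> a = set_mset (f a)" for a
  have fa: "f a = mset_set (\<Phi> a) \<and> finite (\<Phi> a)" for a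
  proof -
    have "f a \<in> mset_set ` {S::'k set. finite S}" using f(1) bij_betwE by blast
    then obtain S where "finite S" "f a = mset_set S" by auto
    then show ?thesis unfolding \<Phi>_def by simp
  qed
  have bs: "bij_betw set_mset (mset_set ` {S::'k set. finite S}) {S. finite S}"
    by (rule bij_betw_byWitness[where f'=mset_set]) auto
  have "bij_betw \<Phi> UNIV {S. finite S}" unfolding \<Phi>_def
    using bij_betw_trans[OF f(1) bs] by (simp add: comp_def)
  moreover have "\<forall>a b. a < b \<longleftrightarrow> fl (\<Phi> a) (\<Phi> b)"
  proof (intro allI)
    fix a b
    have "f a < f b \<longleftrightarrow> fl (\<Phi> a) (\<Phi> b)" using fl_mset[of "\<Phi> a" "\<Phi> b"] fa[of a] fa[of b] by simp
    then show "a < b \<longleftrightarrow> fl (\<Phi> a) (\<Phi> b)" using f(2) by simp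
  qed
  ultimately show ?thesis by blast
qed

lemma sh_ex:
  assumes "inf_card_type TYPE('k::wellorder)"
  shows "\<exists>s::'k \<Rightarrow> 'k. bij_betw s UNIV {\<mu>..} \<and> (\<forall>a b. a < b \<longleftrightarrow> s a < s b)"
proof -
  have inf: "\<not> finite (UNIV::'k set)" and sk: "\<forall>a::'k. |{..<a}| <o |UNIV::'k set|"
    using ict[OF assms] by auto
  have small: "\<forall>y\<in>{\<mu>..}. |{z\<in>{\<mu>..}. z<y}| <o |UNIV::'k set|"
  proof
    fix y :: 'k
    have "|{z\<in>{\<mu>..}. z<y}| \<le>o |{..<y}|" by (rule card_of_mono1) auto
    then show "|{z\<in>{\<mu>..}. z<y}| <o |UNIV::'k set|" using sk ordLeq_ordLess_trans by blast
  qed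
  have big: "\<not> |{\<mu>..}| <o |UNIV::'k set|"
  proof
    assume "|{\<mu>..}| <o |UNIV::'k set|"
    then have "|{..<\<mu>} \<union> {\<mu>..}| <o |UNIV::'k set|" using card_of_Un_ordLess_infinite[OF inf sk[rule_format]] by blast
    moreover have "{..<\<mu>} \<union> {\<mu>..} = UNIV" by auto
    ultimately show False using ordLess_irreflexive[of "|UNIV::'k set|"] by simp
  qed
  show ?thesis using kl[OF small big sk] .
qed

end


locale PH =
  fixes \<Phi> :: "'k::wellorder \<Rightarrow> 'k set"
  assumes ict: "inf_card_type TYPE('k)"
    and bij: "bij_betw \<Phi> UNIV {S. finite S}"
    and ord: "\<And>a b. a < b \<longleftrightarrow> fl (\<Phi> a) (\<Phi> b)"
begin

definition \<Psi> :: "'k set \<Rightarrow> 'k" where "\<Psi> S = inv_into UNIV \<Phi> S"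

lemma fin[simp]: "finite (\<Phi> a)" using bij bij_betwE by blast

lemma inj_Phi: "\<Phi> a = \<Phi> b \<longleftrightarrow> a = b"
  using bij unfolding bij_betw_def inj_on_def by blast

lemma PsiPhi[simp]: "\<Psi> (\<Phi> a) = a"
  unfolding \<Psi>_def using bij by (simp add: bij_betw_def)

lemma PhiPsi[simp]: "finite S \<Longrightarrow> \<Phi> (\<Psi> S) = S"
  unfolding \<Psi>_def using bij by (simp add: bij_betw_def f_inv_into_f)

lemma less_Psi: "finite S \<Longrightarrow> finite T \<Longrightarrow> \<Psi> S < \<Psi> T \<longleftrightarrow> fl S T"
  using ord[of "\<Psi> S" "\<Psi> T"] by simp

lemma less_Psi2: "finite T \<Longrightarrow> a < \<Psi> T \<longleftrightarrow> fl (\<Phi> a) T"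
  using ord[of a "\<Psi> T"] by simp

definition sh :: "'k \<Rightarrow> 'k \<Rightarrow> 'k" where
  "sh \<mu> = (SOME s. bij_betw s UNIV {\<mu>..} \<and> (\<forall>a b. a < b \<longleftrightarrow> s a < s b))"

lemma sh_prop: "bij_betw (sh \<mu>) UNIV {\<mu>..} \<and> (\<forall>a b. a < b \<longleftrightarrow> sh \<mu> a < sh \<mu> b)"
  using sh_ex[OF ict, of \<mu>] unfolding sh_def by (rule someI_ex)

lemma sh_mono: "a < b \<longleftrightarrow> sh \<mu> a < sh \<mu> b" using sh_prop by blast

lemma sh_ge: "\<mu> \<le> sh \<mu> a"
  using bij_betwE[OF conjunct1[OF sh_prop[of \<mu>]]] by simp

lemma sh_surj: "\<mu> \<le> d \<Longrightarrow> \<exists>b. sh \<mu> b = d"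
  using sh_prop unfolding bij_betw_def by (metis atLeast_iff imageE)

lemma sh_inj: "sh \<mu> a = sh \<mu> b \<longleftrightarrow> a = b"
  using sh_mono by (metis less_irrefl neqE)

lemma oexp2_eq: "oexp2 x = \<Psi> {x}"
proof -
  have "oiso {..<\<Psi> {x}} (<) {S. finite S \<and> S \<subseteq> {..<x}} fl"
  proof (rule oiso_intro)
    show "\<Phi> ` {..<\<Psi> {x}} = {S. finite S \<and> S \<subseteq> {..<x}}"
    proof
      show "\<Phi> ` {..<\<Psi> {x}} \<subseteq> {S. finite S \<and> S \<subseteq> {..<x}}"
      proof
        fix S assume "S \<in> \<Phi> ` {..<\<Psi> {x}}"
        then obtain a where a: "a < \<Psi> {x}" "S = \<Phi> a" by auto
        then have "fl (\<Phi> a) {x}" using less_Psi2[of "{x}" a] by simp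
        then show "S \<in> {S. finite S \<and> S \<subseteq> {..<x}}" using fl_singleton[OF fin] a by simp
      qed
      show "{S. finite S \<and> S \<subseteq> {..<x}} \<subseteq> \<Phi> ` {..<\<Psi> {x}}"
      proof
        fix S assume S: "S \<in> {S. finite S \<and> S \<subseteq> {..<x}}"
        then have "\<Psi> S < \<Psi> {x}" using less_Psi fl_singleton by auto
        moreover have "S = \<Phi> (\<Psi> S)" using S by simp
        ultimately show "S \<in> \<Phi> ` {..<\<Psi> {x}}" by blast
      qed
    qed
    show "\<forall>a\<in>{..<\<Psi> {x}}. \<forall>b\<in>{..<\<Psi> {x}}. a < b \<longleftrightarrow> fl (\<Phi> a) (\<Phi> b)" using ord by blast
    show "\<forall>a\<in>{..<\<Psi> {x}}. \<forall>b\<in>{..<\<Psi> {x}}. a \<noteq> b \<longrightarrow> a < b \<or> b < a" by auto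
    show "\<forall>S. \<not> fl S S" using fl_irrefl by blast
  qed
  then show ?thesis unfolding oexp2_def fl_fun by (rule oiso_the)
qed

lemma fl_extend:
  assumes "finite V" "finite P" "finite W" "\<forall>p\<in>P. \<forall>w\<in>W. w < p" "fl V P"
  shows "fl V (P \<union> W)"
proof (cases "W = {}")
  case True then show ?thesis using assms by simp
next
  case False
  have "fl ({} \<union> P) (W \<union> P) \<longleftrightarrow> fl P P \<or> (P = P \<and> fl {} W)"
    using assms by (intro fl_split) auto
  then have "fl P (P \<union> W)" using fl_empty2[OF assms(3) False] by (simp add: Un_commute)
  then show ?thesis using fl_trans[OF assms(1) assms(2) _ assms(5)] assms(2,3) by simp
qed

lemma oadd_sep:
  assumes fP: "finite P" and fQ: "finite Q" and lo: "\<forall>p\<in>P. \<forall>q\<in>Q. q < p"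
  shows "oadd (\<Psi> P) (\<Psi> Q) = \<Psi> (P \<union> Q)"
proof -
  define g where "g = case_sum id (\<lambda>b. \<Psi> (P \<union> \<Phi> b))"
  have belowQ: "b < \<Psi> Q \<Longrightarrow> \<forall>p\<in>P. \<forall>v\<in>\<Phi> b. v < p" for b
  proof -
    assume "b < \<Psi> Q"
    then have "fl (\<Phi> b) Q" using less_Psi2 fQ by simp
    then show ?thesis using fl_below[OF fin fQ] lo by (meson order.strict_trans1)
  qed
  have inl_lt: "a < \<Psi> P \<Longrightarrow> b < \<Psi> Q \<Longrightarrow> a < \<Psi> (P \<union> \<Phi> b)" for a b
    using belowQ[of b] fl_extend[of "\<Phi> a" P "\<Phi> b"] fP less_Psi2 by simp
  have inr_cmp: "b1 < \<Psi> Q \<Longrightarrow> b2 < \<Psi> Q \<Longrightarrow> \<Psi> (P \<union> \<Phi> b1) < \<Psi> (P \<union> \<Phi> b2) \<longleftrightarrow> b1 < b2" for b1 b2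
  proof -
    assume a: "b1 < \<Psi> Q" "b2 < \<Psi> Q"
    have "fl (\<Phi> b1 \<union> P) (\<Phi> b2 \<union> P) \<longleftrightarrow> fl P P \<or> (P = P \<and> fl (\<Phi> b1) (\<Phi> b2))"
      using fP belowQ[OF a(1)] belowQ[OF a(2)] by (intro fl_split) auto
    then have "fl (P \<union> \<Phi> b1) (P \<union> \<Phi> b2) \<longleftrightarrow> fl (\<Phi> b1) (\<Phi> b2)"
      using fl_irrefl[of P] by (simp add: Un_commute)
    then show ?thesis using less_Psi[of "P \<union> \<Phi> b1" "P \<union> \<Phi> b2"] fP ord[of b1 b2] by simp
  qed
  have "oiso ({..<\<Psi> P} <+> {..<\<Psi> Q}) sum_less {..<\<Psi> (P \<union> Q)} (<)"
  proof (rule oiso_intro)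
    show "g ` ({..<\<Psi> P} <+> {..<\<Psi> Q}) = {..<\<Psi> (P \<union> Q)}"
    proof
      show "g ` ({..<\<Psi> P} <+> {..<\<Psi> Q}) \<subseteq> {..<\<Psi> (P \<union> Q)}"
      proof
        fix z assume "z \<in> g ` ({..<\<Psi> P} <+> {..<\<Psi> Q})"
        then obtain x where x: "x \<in> {..<\<Psi> P} <+> {..<\<Psi> Q}" "z = g x" by blast
        show "z \<in> {..<\<Psi> (P \<union> Q)}"
        proof (cases x)
          case (Inl a)
          then have "fl (\<Phi> a) P" using x less_Psi2 fP by auto
          then have "fl (\<Phi> a) (P \<union> Q)" using fl_extend[OF fin fP fQ lo] by simp
          then show ?thesis using x Inl g_def less_Psi2 fP fQ by simp
        next
          case (Inr b)
          then have b: "b < \<Psi> Q" using x by auto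
          have "fl (\<Phi> b \<union> P) (Q \<union> P) \<longleftrightarrow> fl P P \<or> (P = P \<and> fl (\<Phi> b) Q)"
            using fP fQ belowQ[OF b] lo by (intro fl_split) auto
          then have "fl (P \<union> \<Phi> b) (P \<union> Q)" using b less_Psi2 fQ by (simp add: Un_commute)
          then show ?thesis using x Inr g_def less_Psi fP fQ by simp
        qed
      qed
      show "{..<\<Psi> (P \<union> Q)} \<subseteq> g ` ({..<\<Psi> P} <+> {..<\<Psi> Q})"
      proof
        fix d assume "d \<in> {..<\<Psi> (P \<union> Q)}"
        then have f: "fl (\<Phi> d) (P \<union> Q)" using less_Psi2 fP fQ by simp
        show "d \<in> g ` ({..<\<Psi> P} <+> {..<\<Psi> Q})"
        proof (cases "fl (\<Phi> d) P")
          case True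
          then have "d < \<Psi> P" using less_Psi2 fP by simp
          then show ?thesis unfolding g_def by (intro image_eqI[of _ _ "Inl d"]) auto
        next
          case False
          from fl_union_decomp[OF fin fP fQ lo f False]
          have dc: "P \<subseteq> \<Phi> d" "fl (\<Phi> d - P) Q" by auto
          have "\<Psi> (\<Phi> d - P) < \<Psi> Q" using dc less_Psi fQ by simp
          moreover have "g (Inr (\<Psi> (\<Phi> d - P))) = d" unfolding g_def using dc
            by (simp add: Un_absorb1 Un_Diff_cancel)
          ultimately show ?thesis by (intro image_eqI[of _ _ "Inr (\<Psi> (\<Phi> d - P))"]) auto
        qed
      qed
    qed
    show "\<forall>x\<in>{..<\<Psi> P} <+> {..<\<Psi> Q}. \<forall>y\<in>{..<\<Psi> P} <+> {..<\<Psi> Q}. sum_less x y \<longleftrightarrow> g x < g y"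
    proof (intro ballI)
      fix x y assume x: "x \<in> {..<\<Psi> P} <+> {..<\<Psi> Q}" and y: "y \<in> {..<\<Psi> P} <+> {..<\<Psi> Q}"
      show "sum_less x y \<longleftrightarrow> g x < g y"
      proof (cases x)
        case (Inl a)
        then have a: "a < \<Psi> P" using x by auto
        show ?thesis
        proof (cases y)
          case (Inl a') then show ?thesis using \<open>x = Inl a\<close> g_def by simp
        next
          case (Inr b') then have "b' < \<Psi> Q" using y by auto
          then show ?thesis using \<open>x = Inl a\<close> Inr g_def inl_lt a by simp
        qed
      next
        case (Inr b)
        then have b: "b < \<Psi> Q" using x by auto
        show ?thesis
        proof (cases y)
          case (Inl a') then have "a' < \<Psi> P" using y by auto
          then have "a' < \<Psi> (P \<union> \<Phi> b)" using inl_lt b by simp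
          then show ?thesis using \<open>x = Inr b\<close> Inl g_def by simp
        next
          case (Inr b') then have "b' < \<Psi> Q" using y by auto
          then show ?thesis using \<open>x = Inr b\<close> Inr g_def inr_cmp b by simp
        qed
      qed
    qed
    show "\<forall>x\<in>{..<\<Psi> P} <+> {..<\<Psi> Q}. \<forall>y\<in>{..<\<Psi> P} <+> {..<\<Psi> Q}. x \<noteq> y \<longrightarrow> sum_less x y \<or> sum_less y x"
      by (auto elim!: PlusE)
    show "\<forall>x::'k. \<not> x < x" by simp
  qed
  then show ?thesis unfolding oadd_def by (rule oiso_the[OF oiso_sym])
qed

lemma oadd_sh: "oadd \<mu> \<beta> = sh \<mu> \<beta>"
proof -
  define g where "g = case_sum id (sh \<mu>)"
  have "oiso ({..<\<mu>} <+> {..<\<beta>}) sum_less {..<sh \<mu> \<beta>} (<)"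
  proof (rule oiso_intro)
    show "g ` ({..<\<mu>} <+> {..<\<beta>}) = {..<sh \<mu> \<beta>}"
    proof
      show "g ` ({..<\<mu>} <+> {..<\<beta>}) \<subseteq> {..<sh \<mu> \<beta>}"
        unfolding g_def using sh_ge[of \<mu> \<beta>] sh_mono by (auto elim!: PlusE)
      show "{..<sh \<mu> \<beta>} \<subseteq> g ` ({..<\<mu>} <+> {..<\<beta>})"
      proof
        fix d assume d: "d \<in> {..<sh \<mu> \<beta>}"
        show "d \<in> g ` ({..<\<mu>} <+> {..<\<beta>})"
        proof (cases "d < \<mu>")
          case True then show ?thesis unfolding g_def by (intro image_eqI[of _ _ "Inl d"]) auto
        next
          case False
          then obtain b where b: "sh \<mu> b = d" using sh_surj by (meson not_less)
          then have "b < \<beta>" using d sh_mono by auto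
          then show ?thesis unfolding g_def using b by (intro image_eqI[of _ _ "Inr b"]) auto
        qed
      qed
    qed
    show "\<forall>x\<in>{..<\<mu>} <+> {..<\<beta>}. \<forall>y\<in>{..<\<mu>} <+> {..<\<beta>}. sum_less x y \<longleftrightarrow> g x < g y"
    proof (intro ballI)
      fix x y assume x: "x \<in> {..<\<mu>} <+> {..<\<beta>}" and y: "y \<in> {..<\<mu>} <+> {..<\<beta>}"
      have lt: "a < \<mu> \<Longrightarrow> a < sh \<mu> b" for a b using sh_ge[of \<mu> b] by simp
      show "sum_less x y \<longleftrightarrow> g x < g y"
      proof (cases x)
        case (Inl a)
        then have a: "a < \<mu>" using x by auto
        show ?thesis
        proof (cases y)
          case (Inl a') then show ?thesis using \<open>x = Inl a\<close> g_def by simp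
        next
          case (Inr b') then show ?thesis using \<open>x = Inl a\<close> g_def lt a by simp
        qed
      next
        case (Inr b)
        show ?thesis
        proof (cases y)
          case (Inl a') then have "a' < \<mu>" using y by auto
          then have "a' < sh \<mu> b" using lt by simp
          then show ?thesis using \<open>x = Inr b\<close> Inl g_def by simp
        next
          case (Inr b') then show ?thesis using \<open>x = Inr b\<close> g_def sh_mono by simp
        qed
      qed
    qed
    show "\<forall>x\<in>{..<\<mu>} <+> {..<\<beta>}. \<forall>y\<in>{..<\<mu>} <+> {..<\<beta>}. x \<noteq> y \<longrightarrow> sum_less x y \<or> sum_less y x"
      by (auto elim!: PlusE)
    show "\<forall>x::'k. \<not> x < x" by simp
  qed
  then show ?thesis unfolding oadd_def by (rule oiso_the[OF oiso_sym])
qed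

end


context PH begin

lemma low_iff: "a < \<Psi> {\<mu>} \<longleftrightarrow> \<Phi> a \<subseteq> {..<\<mu>}"
  using less_Psi2[of "{\<mu>}" a] fl_singleton[OF fin] by simp

lemma inj_sh: "inj (sh \<mu>)" using sh_inj by (simp add: inj_def)

lemma sh_img_eq: "sh \<mu> ` X = sh \<mu> ` Y \<longleftrightarrow> X = Y"
  using inj_sh by (simp add: inj_image_eq_iff)

lemma fl_sh: "finite X \<Longrightarrow> finite Y \<Longrightarrow> fl (sh \<mu> ` X) (sh \<mu> ` Y) \<longleftrightarrow> fl X Y"
  by (rule fl_mono_image) (use sh_mono in auto)

lemma split_sh:
  assumes "A1 \<subseteq> {..<\<mu>}" "A2 \<subseteq> {..<\<mu>}" "finite A1" "finite A2" "finite X" "finite Y"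
  shows "fl (A1 \<union> sh \<mu> ` X) (A2 \<union> sh \<mu> ` Y) \<longleftrightarrow> fl X Y \<or> (X = Y \<and> fl A1 A2)"
proof -
  have "\<forall>a\<in>A1 \<union> A2. \<forall>b\<in>sh \<mu> ` X \<union> sh \<mu> ` Y. a < b"
    using assms(1,2) sh_ge by (auto intro: order.strict_trans2)
  then have "fl (A1 \<union> sh \<mu> ` X) (A2 \<union> sh \<mu> ` Y) \<longleftrightarrow> fl (sh \<mu> ` X) (sh \<mu> ` Y) \<or> (sh \<mu> ` X = sh \<mu> ` Y \<and> fl A1 A2)"
    using assms by (intro fl_split) auto
  then show ?thesis using fl_sh[OF assms(5,6)] sh_img_eq by simp
qed

lemma omul_eq: "omul (\<Psi> {\<mu>}) b = \<Psi> (sh \<mu> ` \<Phi> b)"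
proof -
  define g where "g = (\<lambda>(a, c). \<Psi> (\<Phi> a \<union> sh \<mu> ` \<Phi> c))"
  define R where "R = (\<lambda>(x1::'k, y1::'k) (x2, y2). y1 < y2 \<or> (y1 = y2 \<and> x1 < x2))"
  have "oiso ({..<\<Psi> {\<mu>}} \<times> {..<b}) R {..<\<Psi> (sh \<mu> ` \<Phi> b)} (<)"
  proof (rule oiso_intro)
    show "g ` ({..<\<Psi> {\<mu>}} \<times> {..<b}) = {..<\<Psi> (sh \<mu> ` \<Phi> b)}"
    proof
      show "g ` ({..<\<Psi> {\<mu>}} \<times> {..<b}) \<subseteq> {..<\<Psi> (sh \<mu> ` \<Phi> b)}"
      proof
        fix z assume "z \<in> g ` ({..<\<Psi> {\<mu>}} \<times> {..<b})"
        then obtain a c where ac: "a < \<Psi> {\<mu>}" "c < b" "z = g (a, c)" by auto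
        have "fl (\<Phi> a \<union> sh \<mu> ` \<Phi> c) ({} \<union> sh \<mu> ` \<Phi> b) \<longleftrightarrow> fl (\<Phi> c) (\<Phi> b) \<or> (\<Phi> c = \<Phi> b \<and> fl (\<Phi> a) {})"
          using low_iff ac by (intro split_sh) auto
        then have "fl (\<Phi> a \<union> sh \<mu> ` \<Phi> c) (sh \<mu> ` \<Phi> b)" using ac ord by simp
        then show "z \<in> {..<\<Psi> (sh \<mu> ` \<Phi> b)}" using ac less_Psi g_def by simp
      qed
      show "{..<\<Psi> (sh \<mu> ` \<Phi> b)} \<subseteq> g ` ({..<\<Psi> {\<mu>}} \<times> {..<b})"
      proof
        fix d assume d: "d \<in> {..<\<Psi> (sh \<mu> ` \<Phi> b)}"
        define U where "U = \<Phi> d"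
        define A where "A = U \<inter> {..<\<mu>}"
        define X where "X = sh \<mu> -` U"
        have fX: "finite X" unfolding X_def U_def using inj_sh by (intro finite_vimageI) auto
        have hi: "sh \<mu> ` X = U \<inter> {\<mu>..}"
        proof
          show "sh \<mu> ` X \<subseteq> U \<inter> {\<mu>..}" unfolding X_def using sh_ge by auto
          show "U \<inter> {\<mu>..} \<subseteq> sh \<mu> ` X"
          proof
            fix u assume u: "u \<in> U \<inter> {\<mu>..}"
            then obtain x where "sh \<mu> x = u" using sh_surj by auto
            then show "u \<in> sh \<mu> ` X" unfolding X_def using u by auto
          qed
        qed
        have UA: "U = A \<union> sh \<mu> ` X" unfolding A_def hi by auto
        have fA: "finite A" unfolding A_def U_def by simp
        have "fl U (sh \<mu> ` \<Phi> b)" using d less_Psi2 U_def by simp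
        then have "fl (A \<union> sh \<mu> ` X) ({} \<union> sh \<mu> ` \<Phi> b)" using UA by simp
        moreover have "fl (A \<union> sh \<mu> ` X) ({} \<union> sh \<mu> ` \<Phi> b) \<longleftrightarrow> fl X (\<Phi> b) \<or> (X = \<Phi> b \<and> fl A {})"
          using fA fX unfolding A_def by (intro split_sh) auto
        ultimately have "fl X (\<Phi> b)" using fl_empty[of A] by blast
        then have c: "\<Psi> X < b" using ord[of "\<Psi> X" b] fX by simp
        have a: "\<Psi> A < \<Psi> {\<mu>}" using low_iff fA unfolding A_def by simp
        have "g (\<Psi> A, \<Psi> X) = \<Psi> U" unfolding g_def using fA fX UA by simp
        then have "g (\<Psi> A, \<Psi> X) = d" unfolding U_def by simp
        then show "d \<in> g ` ({..<\<Psi> {\<mu>}} \<times> {..<b})" using a c by force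
      qed
    qed
    show "\<forall>x\<in>{..<\<Psi> {\<mu>}} \<times> {..<b}. \<forall>y\<in>{..<\<Psi> {\<mu>}} \<times> {..<b}. R x y \<longleftrightarrow> g x < g y"
    proof (intro ballI)
      fix x y assume x: "x \<in> {..<\<Psi> {\<mu>}} \<times> {..<b}" and y: "y \<in> {..<\<Psi> {\<mu>}} \<times> {..<b}"
      obtain a1 c1 where 1: "x = (a1, c1)" "a1 < \<Psi> {\<mu>}" using x by auto
      obtain a2 c2 where 2: "y = (a2, c2)" "a2 < \<Psi> {\<mu>}" using y by auto
      have "fl (\<Phi> a1 \<union> sh \<mu> ` \<Phi> c1) (\<Phi> a2 \<union> sh \<mu> ` \<Phi> c2) \<longleftrightarrow> fl (\<Phi> c1) (\<Phi> c2) \<or> (\<Phi> c1 = \<Phi> c2 \<and> fl (\<Phi> a1) (\<Phi> a2))"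
        using low_iff 1 2 by (intro split_sh) auto
      then have "g x < g y \<longleftrightarrow> c1 < c2 \<or> (c1 = c2 \<and> a1 < a2)"
        unfolding 1 2 g_def using less_Psi ord inj_Phi by simp
      then show "R x y \<longleftrightarrow> g x < g y" unfolding R_def 1 2 by simp
    qed
    show "\<forall>x\<in>{..<\<Psi> {\<mu>}} \<times> {..<b}. \<forall>y\<in>{..<\<Psi> {\<mu>}} \<times> {..<b}. x \<noteq> y \<longrightarrow> R x y \<or> R y x"
      unfolding R_def by auto
    show "\<forall>x::'k. \<not> x < x" by simp
  qed
  then show ?thesis unfolding omul_def R_def by (rule oiso_the[OF oiso_sym])
qed

lemma ozero_eq: "ozero = \<Psi> {}"
  unfolding ozero_def
proof (rule Least_equality)
  show "True" ..
  fix y show "\<Psi> {} \<le> y" using less_Psi2[of "{}" y] fl_empty by (simp add: not_less[symmetric])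
qed

lemma nf_val_eq: "sorted_wrt (>) xs \<Longrightarrow> nf_val xs = \<Psi> (set xs)"
proof (induction xs)
  case Nil then show ?case by (simp add: ozero_eq)
next
  case (Cons a as)
  then have IH: "nf_val as = \<Psi> (set as)" and lo: "\<forall>q\<in>set as. q < a" by auto
  have "nf_val (a # as) = oadd (\<Psi> {a}) (\<Psi> (set as))" by (simp add: IH oexp2_eq)
  also have "\<dots> = \<Psi> ({a} \<union> set as)" using lo by (intro oadd_sep) auto
  finally show ?case by simp
qed

lemma Lset_eq: "Lset c = \<Phi> c"
proof -
  define xs0 where "xs0 = rev (sorted_list_of_set (\<Phi> c))"
  have s0: "sorted_wrt (>) xs0" unfolding xs0_def sorted_wrt_rev
    using strict_sorted_list_of_set[of "\<Phi> c"] by simp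
  have set0: "set xs0 = \<Phi> c" unfolding xs0_def by simp
  have P0: "sorted_wrt (>) xs0 \<and> nf_val xs0 = c" using s0 set0 nf_val_eq by simp
  have "(THE xs. sorted_wrt (>) xs \<and> nf_val xs = c) = xs0"
  proof (rule the_equality)
    show "sorted_wrt (>) xs0 \<and> nf_val xs0 = c" using P0 .
    fix ys assume ys: "sorted_wrt (>) ys \<and> nf_val ys = c"
    then have "\<Psi> (set ys) = c" using nf_val_eq[of ys] by simp
    then have sy: "set ys = \<Phi> c" using PhiPsi[of "set ys"] by auto
    have "sorted_wrt (<) (rev ys)" "sorted_wrt (<) (rev xs0)"
      using ys s0 by (simp_all add: sorted_wrt_rev)
    then have "rev ys = rev xs0"
      using sorted_distinct_set_unique[of "rev ys" "rev xs0"] sy set0 by (simp add: strict_sorted_iff)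
    then show "ys = xs0" by simp
  qed
  then show ?thesis unfolding Lset_def using set0 by simp
qed

lemma ojoin_eq: "ojoin b g = \<Psi> (\<Phi> b \<union> \<Phi> g)"
  unfolding ojoin_def
proof (rule the_equality)
  show "Lset (\<Psi> (\<Phi> b \<union> \<Phi> g)) = Lset b \<union> Lset g" by (simp add: Lset_eq)
  fix c assume "Lset c = Lset b \<union> Lset g"
  then have "\<Phi> c = \<Phi> b \<union> \<Phi> g" by (simp add: Lset_eq)
  then show "c = \<Psi> (\<Phi> b \<union> \<Phi> g)" by (metis PsiPhi)
qed

end


context PH begin

lemma sh_lt: "z < \<eta> \<Longrightarrow> sh \<eta> z < sh \<eta> \<eta>" using sh_mono by blast

lemma enc_eq:
  assumes "b < \<Psi> {\<eta>}" "g < \<Psi> {\<eta>}"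
  shows "oadd (omul (\<Psi> {\<eta>}) b) g = \<Psi> (sh \<eta> ` \<Phi> b \<union> \<Phi> g)"
proof -
  have lo: "\<Phi> g \<subseteq> {..<\<eta>}" using assms low_iff by simp
  have "oadd (\<Psi> (sh \<eta> ` \<Phi> b)) (\<Psi> (\<Phi> g)) = \<Psi> (sh \<eta> ` \<Phi> b \<union> \<Phi> g)"
  proof (rule oadd_sep)
    show "\<forall>p\<in>sh \<eta> ` \<Phi> b. \<forall>q\<in>\<Phi> g. q < p" using lo sh_ge[of \<eta>] by (auto intro: order.strict_trans2)
  qed auto
  then show ?thesis by (simp add: omul_eq)
qed

lemma enc_inj:
  assumes "b < \<Psi> {\<eta>}" "g < \<Psi> {\<eta>}" "b' < \<Psi> {\<eta>}" "g' < \<Psi> {\<eta>}"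
    and e: "\<Psi> (sh \<eta> ` \<Phi> b \<union> \<Phi> g) = \<Psi> (sh \<eta> ` \<Phi> b' \<union> \<Phi> g')"
  shows "b = b' \<and> g = g'"
proof -
  have lo: "\<Phi> g \<subseteq> {..<\<eta>}" "\<Phi> g' \<subseteq> {..<\<eta>}" using assms low_iff by auto
  have E: "sh \<eta> ` \<Phi> b \<union> \<Phi> g = sh \<eta> ` \<Phi> b' \<union> \<Phi> g'"
    using arg_cong[OF e, of \<Phi>] by simp
  have hi: "sh \<eta> ` X \<subseteq> {\<eta>..}" for X using sh_ge by auto
  have "(sh \<eta> ` \<Phi> b \<union> \<Phi> g) \<inter> {..<\<eta>} = \<Phi> g" using lo hi[of "\<Phi> b"] by auto
  moreover have "(sh \<eta> ` \<Phi> b' \<union> \<Phi> g') \<inter> {..<\<eta>} = \<Phi> g'" using lo hi[of "\<Phi> b'"] by auto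
  ultimately have g: "\<Phi> g = \<Phi> g'" using E by simp
  have "(sh \<eta> ` \<Phi> b \<union> \<Phi> g) \<inter> {\<eta>..} = sh \<eta> ` \<Phi> b" using lo hi[of "\<Phi> b"] by auto
  moreover have "(sh \<eta> ` \<Phi> b' \<union> \<Phi> g') \<inter> {\<eta>..} = sh \<eta> ` \<Phi> b'" using lo hi[of "\<Phi> b'"] by auto
  ultimately have "sh \<eta> ` \<Phi> b = sh \<eta> ` \<Phi> b'" using E by simp
  then have "\<Phi> b = \<Phi> b'" using sh_img_eq by simp
  then show ?thesis using g inj_Phi by simp
qed

lemma yvec_enc:
  assumes "b < \<Psi> {\<eta>}" "g < \<Psi> {\<eta>}"
  shows "yvec \<eta> x (\<Psi> (sh \<eta> ` \<Phi> b \<union> \<Phi> g)) = x b g"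
proof -
  let ?d = "\<Psi> (sh \<eta> ` \<Phi> b \<union> \<Phi> g)"
  have ex: "\<exists>b g. b < oexp2 \<eta> \<and> g < oexp2 \<eta> \<and> ?d = oadd (omul (oexp2 \<eta>) b) g"
    by (rule exI[of _ b], rule exI[of _ g]) (simp add: oexp2_eq enc_eq assms)
  have "(THE v. \<exists>b' g'. b' < oexp2 \<eta> \<and> g' < oexp2 \<eta> \<and> ?d = oadd (omul (oexp2 \<eta>) b') g' \<and> v = x b' g') = x b g"
  proof (rule the_equality)
    show "\<exists>b' g'. b' < oexp2 \<eta> \<and> g' < oexp2 \<eta> \<and> ?d = oadd (omul (oexp2 \<eta>) b') g' \<and> x b g = x b' g'"
      by (rule exI[of _ b], rule exI[of _ g]) (simp add: oexp2_eq enc_eq assms)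
    fix v assume "\<exists>b' g'. b' < oexp2 \<eta> \<and> g' < oexp2 \<eta> \<and> ?d = oadd (omul (oexp2 \<eta>) b') g' \<and> v = x b' g'"
    then obtain b' g' where bg: "b' < \<Psi> {\<eta>}" "g' < \<Psi> {\<eta>}" "?d = \<Psi> (sh \<eta> ` \<Phi> b' \<union> \<Phi> g')" "v = x b' g'"
      using enc_eq by (auto simp: oexp2_eq)
    then have "b = b' \<and> g = g'" using enc_inj assms by blast
    then show "v = x b g" using bg by simp
  qed
  then show ?thesis unfolding yvec_def using ex by simp
qed

lemma yvec_zero:
  assumes "\<not> (\<exists>b g. b < \<Psi> {\<eta>} \<and> g < \<Psi> {\<eta>} \<and> d = \<Psi> (sh \<eta> ` \<Phi> b \<union> \<Phi> g))"
  shows "yvec \<eta> x d = 0"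
proof -
  have "\<not> (\<exists>b g. b < oexp2 \<eta> \<and> g < oexp2 \<eta> \<and> d = oadd (omul (oexp2 \<eta>) b) g)"
    using assms enc_eq by (auto simp: oexp2_eq)
  then show ?thesis unfolding yvec_def by auto
qed

lemma alpha_eq:
  assumes "\<xi> < \<Psi> {\<eta>}"
  shows "oadd (oadd (omul (oexp2 (oadd \<eta> \<eta>)) a) (omul (oexp2 \<eta>) \<xi>)) \<xi>
     = \<Psi> (sh (sh \<eta> \<eta>) ` \<Phi> a \<union> sh \<eta> ` \<Phi> \<xi> \<union> \<Phi> \<xi>)"
proof -
  have lo: "\<Phi> \<xi> \<subseteq> {..<\<eta>}" using assms low_iff by simp
  have m1: "omul (oexp2 (oadd \<eta> \<eta>)) a = \<Psi> (sh (sh \<eta> \<eta>) ` \<Phi> a)"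
    by (simp add: oexp2_eq oadd_sh omul_eq)
  have m2: "omul (oexp2 \<eta>) \<xi> = \<Psi> (sh \<eta> ` \<Phi> \<xi>)" by (simp add: oexp2_eq omul_eq)
  have s1: "oadd (\<Psi> (sh (sh \<eta> \<eta>) ` \<Phi> a)) (\<Psi> (sh \<eta> ` \<Phi> \<xi>)) = \<Psi> (sh (sh \<eta> \<eta>) ` \<Phi> a \<union> sh \<eta> ` \<Phi> \<xi>)"
  proof (rule oadd_sep)
    show "\<forall>p\<in>sh (sh \<eta> \<eta>) ` \<Phi> a. \<forall>q\<in>sh \<eta> ` \<Phi> \<xi>. q < p"
    proof (intro ballI)
      fix p q assume "p \<in> sh (sh \<eta> \<eta>) ` \<Phi> a" "q \<in> sh \<eta> ` \<Phi> \<xi>"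
      then obtain z z' where "p = sh (sh \<eta> \<eta>) z" "q = sh \<eta> z'" "z' < \<eta>" using lo by auto
      then show "q < p" using sh_lt[of z' \<eta>] sh_ge[of "sh \<eta> \<eta>" z] by simp
    qed
  qed auto
  have s2: "oadd (\<Psi> (sh (sh \<eta> \<eta>) ` \<Phi> a \<union> sh \<eta> ` \<Phi> \<xi>)) (\<Psi> (\<Phi> \<xi>)) = \<Psi> (sh (sh \<eta> \<eta>) ` \<Phi> a \<union> sh \<eta> ` \<Phi> \<xi> \<union> \<Phi> \<xi>)"
  proof (rule oadd_sep)
    show "\<forall>p\<in>sh (sh \<eta> \<eta>) ` \<Phi> a \<union> sh \<eta> ` \<Phi> \<xi>. \<forall>q\<in>\<Phi> \<xi>. q < p"
    proof (intro ballI)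
      fix p q assume p: "p \<in> sh (sh \<eta> \<eta>) ` \<Phi> a \<union> sh \<eta> ` \<Phi> \<xi>" and q: "q \<in> \<Phi> \<xi>"
      have "\<eta> \<le> p" using p sh_ge[of \<eta>] sh_ge[of "sh \<eta> \<eta>"] by (auto intro: order.trans)
      then show "q < p" using q lo by (auto intro: order.strict_trans2)
    qed
  qed auto
  show ?thesis unfolding m1 m2 s1[symmetric] s2[symmetric] by simp
qed

end


context PH begin

lemma fin_below: "finite {e. \<Phi> e \<subseteq> S}" if "finite S" for S
proof -
  have "{e. \<Phi> e \<subseteq> S} \<subseteq> \<Psi> ` Pow S"
  proof
    fix e assume "e \<in> {e. \<Phi> e \<subseteq> S}"
    then have "\<Phi> e \<in> Pow S" by auto
    then show "e \<in> \<Psi> ` Pow S" by (metis PsiPhi imageI)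
  qed
  then show ?thesis using that finite_subset by blast
qed

lemma key_sums:
  assumes supp: "\<forall>b g. (\<Psi> {\<eta>} \<le> b \<or> \<Psi> {\<eta>} \<le> g) \<longrightarrow> x b g = 0"
    and X1: "finite \<Xi>" and X2: "\<Xi> \<subseteq> {..<\<eta>}" and H1: "finite H" and H2: "H \<subseteq> {sh \<eta> \<eta>..}"
    and al: "\<Phi> \<alpha> = H \<union> sh \<eta> ` \<Xi> \<union> \<Xi>"
  shows "fvec (\<lambda>e. \<Sum>(b, g)\<in>{(b, g). ojoin b g = e}. x b g) \<alpha> = fvec (yvec \<eta> x) \<alpha>"
proof -
  let ?E = "\<Psi> {\<eta>}"
  define Pr where "Pr = {(b, g). \<Phi> b \<subseteq> \<Xi> \<and> \<Phi> g \<subseteq> \<Xi>}"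
  define Q where "Q = {(b, g). \<Phi> b \<union> \<Phi> g \<subseteq> \<Phi> \<alpha>}"
  define enc where "enc = (\<lambda>(b, g). \<Psi> (sh \<eta> ` \<Phi> b \<union> \<Phi> g))"
  have hH: "h \<in> H \<Longrightarrow> sh \<eta> \<eta> \<le> h" for h using H2 by auto
  have geta: "\<eta> \<le> sh \<eta> z" for z using sh_ge by simp
  have lowpart: "\<Phi> \<alpha> \<inter> {..<\<eta>} = \<Xi>"
  proof -
    have "H \<inter> {..<\<eta>} = {}" using hH geta[of \<eta>] by (meson disjoint_iff lessThan_iff not_le order.trans)
    moreover have "sh \<eta> ` \<Xi> \<inter> {..<\<eta>} = {}" using geta by (auto simp: not_less[symmetric])
    ultimately show ?thesis unfolding al using X2 by blast
  qed
  have PrE: "(b, g) \<in> Pr \<Longrightarrow> b < ?E \<and> g < ?E" for b g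
    unfolding Pr_def using X2 low_iff by auto
  have cond: "b < ?E \<Longrightarrow> g < ?E \<Longrightarrow> \<Phi> b \<union> \<Phi> g \<subseteq> \<Phi> \<alpha> \<longleftrightarrow> \<Phi> b \<subseteq> \<Xi> \<and> \<Phi> g \<subseteq> \<Xi>" for b g
    using low_iff lowpart by auto
  have cond2: "b < ?E \<Longrightarrow> g < ?E \<Longrightarrow> sh \<eta> ` \<Phi> b \<union> \<Phi> g \<subseteq> \<Phi> \<alpha> \<longleftrightarrow> \<Phi> b \<subseteq> \<Xi> \<and> \<Phi> g \<subseteq> \<Xi>" for b g
  proof -
    assume b: "b < ?E" and g: "g < ?E"
    have lb: "\<Phi> b \<subseteq> {..<\<eta>}" and lg: "\<Phi> g \<subseteq> {..<\<eta>}" using b g low_iff by auto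
    have "sh \<eta> ` \<Phi> b \<subseteq> \<Phi> \<alpha> \<longleftrightarrow> \<Phi> b \<subseteq> \<Xi>"
    proof
      assume s: "sh \<eta> ` \<Phi> b \<subseteq> \<Phi> \<alpha>"
      show "\<Phi> b \<subseteq> \<Xi>"
      proof
        fix z assume z: "z \<in> \<Phi> b"
        then have zl: "z < \<eta>" using lb by auto
        have "sh \<eta> z \<in> \<Phi> \<alpha>" using s z by auto
        moreover have "sh \<eta> z \<notin> H" using sh_lt[OF zl] hH by (auto simp: not_le[symmetric])
        moreover have "sh \<eta> z \<notin> \<Xi>" using X2 geta[of z] by (auto simp: not_less[symmetric])
        ultimately have "sh \<eta> z \<in> sh \<eta> ` \<Xi>" unfolding al by blast
        then show "z \<in> \<Xi>" using inj_sh by (simp add: inj_image_mem_iff)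
      qed
    next
      assume "\<Phi> b \<subseteq> \<Xi>" then show "sh \<eta> ` \<Phi> b \<subseteq> \<Phi> \<alpha>" unfolding al by blast
    qed
    moreover have "\<Phi> g \<subseteq> \<Phi> \<alpha> \<longleftrightarrow> \<Phi> g \<subseteq> \<Xi>" using lg lowpart by auto
    ultimately show ?thesis by blast
  qed
  have fa: "finite (\<Phi> \<alpha>)" by simp
  have finQ: "finite Q"
  proof -
    have "Q \<subseteq> {e. \<Phi> e \<subseteq> \<Phi> \<alpha>} \<times> {e. \<Phi> e \<subseteq> \<Phi> \<alpha>}" unfolding Q_def by auto
    then show ?thesis using fin_below[OF fa] finite_subset by blast
  qed
  have finPr: "finite Pr"
  proof -
    have "Pr \<subseteq> {e. \<Phi> e \<subseteq> \<Xi>} \<times> {e. \<Phi> e \<subseteq> \<Xi>}" unfolding Pr_def by auto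
    then show ?thesis using fin_below[OF X1] finite_subset by blast
  qed
  have PrQ: "Pr \<subseteq> Q" unfolding Pr_def Q_def using lowpart by auto
  have "fvec (\<lambda>e. \<Sum>(b, g)\<in>{(b, g). ojoin b g = e}. x b g) \<alpha>
      = (\<Sum>e\<in>{e. \<Phi> e \<subseteq> \<Phi> \<alpha>}. \<Sum>(b, g)\<in>{(b, g). ojoin b g = e}. x b g)"
    unfolding fvec_def by (simp add: Lset_eq)
  also have "\<dots> = (\<Sum>e\<in>(\<lambda>(b, g). ojoin b g) ` Q. \<Sum>p\<in>{p\<in>Q. (\<lambda>(b, g). ojoin b g) p = e}. (\<lambda>(b, g). x b g) p)"
  proof (rule sum.cong)
    show "{e. \<Phi> e \<subseteq> \<Phi> \<alpha>} = (\<lambda>(b, g). ojoin b g) ` Q"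
    proof
      show "{e. \<Phi> e \<subseteq> \<Phi> \<alpha>} \<subseteq> (\<lambda>(b, g). ojoin b g) ` Q"
      proof
        fix e assume e: "e \<in> {e. \<Phi> e \<subseteq> \<Phi> \<alpha>}"
        then have "(e, e) \<in> Q" "ojoin e e = e" unfolding Q_def by (auto simp: ojoin_eq)
        then show "e \<in> (\<lambda>(b, g). ojoin b g) ` Q" by force
      qed
      show "(\<lambda>(b, g). ojoin b g) ` Q \<subseteq> {e. \<Phi> e \<subseteq> \<Phi> \<alpha>}"
        unfolding Q_def by (auto simp: ojoin_eq)
    qed
    fix e assume e: "e \<in> (\<lambda>(b, g). ojoin b g) ` Q"
    then have "\<Phi> e \<subseteq> \<Phi> \<alpha>" unfolding Q_def by (auto simp: ojoin_eq)
    then have "{(b, g). ojoin b g = e} = {p\<in>Q. (\<lambda>(b, g). ojoin b g) p = e}"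
      unfolding Q_def by (auto simp: ojoin_eq)
    then show "(\<Sum>(b, g)\<in>{(b, g). ojoin b g = e}. x b g) = (\<Sum>p\<in>{p\<in>Q. (\<lambda>(b, g). ojoin b g) p = e}. (\<lambda>(b, g). x b g) p)"
      by simp
  qed
  also have "\<dots> = (\<Sum>p\<in>Q. (\<lambda>(b, g). x b g) p)"
    using sum.image_gen[OF finQ, of "\<lambda>(b, g). x b g" "\<lambda>(b, g). ojoin b g"] by simp
  also have "\<dots> = (\<Sum>p\<in>Pr. (\<lambda>(b, g). x b g) p)"
  proof (rule sum.mono_neutral_right[OF finQ PrQ], intro ballI)
    fix p assume p: "p \<in> Q - Pr"
    obtain b g where pbg: "p = (b, g)" by (cases p)
    show "(\<lambda>(b, g). x b g) p = 0"
    proof (cases "b < ?E \<and> g < ?E")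
      case True
      then have "(b, g) \<in> Pr" using p pbg cond unfolding Q_def Pr_def by auto
      then show ?thesis using p pbg by simp
    next
      case False then show ?thesis using supp pbg by (auto simp: not_less)
    qed
  qed
  finally have L: "fvec (\<lambda>e. \<Sum>(b, g)\<in>{(b, g). ojoin b g = e}. x b g) \<alpha> = (\<Sum>p\<in>Pr. (\<lambda>(b, g). x b g) p)" .
  have encPr: "enc ` Pr \<subseteq> {d. \<Phi> d \<subseteq> \<Phi> \<alpha>}"
  proof
    fix d assume "d \<in> enc ` Pr"
    then obtain b g where bg: "(b, g) \<in> Pr" "d = enc (b, g)" by auto
    then have "b < ?E" "g < ?E" using PrE by auto
    then show "d \<in> {d. \<Phi> d \<subseteq> \<Phi> \<alpha>}" using bg cond2 unfolding enc_def Pr_def by auto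
  qed
  have "fvec (yvec \<eta> x) \<alpha> = (\<Sum>d\<in>{d. \<Phi> d \<subseteq> \<Phi> \<alpha>}. yvec \<eta> x d)"
    unfolding fvec_def by (simp add: Lset_eq)
  also have "\<dots> = (\<Sum>d\<in>enc ` Pr. yvec \<eta> x d)"
  proof (rule sum.mono_neutral_right[OF fin_below[OF fa] encPr], intro ballI)
    fix d assume d: "d \<in> {d. \<Phi> d \<subseteq> \<Phi> \<alpha>} - enc ` Pr"
    show "yvec \<eta> x d = 0"
    proof (rule yvec_zero, rule notI)
      assume "\<exists>b g. b < ?E \<and> g < ?E \<and> d = \<Psi> (sh \<eta> ` \<Phi> b \<union> \<Phi> g)"
      then obtain b g where bg: "b < ?E" "g < ?E" "d = \<Psi> (sh \<eta> ` \<Phi> b \<union> \<Phi> g)" by blast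
      then have "\<Phi> d = sh \<eta> ` \<Phi> b \<union> \<Phi> g" by simp
      then have "(b, g) \<in> Pr" using d cond2[OF bg(1,2)] unfolding Pr_def by auto
      moreover have "d = enc (b, g)" using bg unfolding enc_def by simp
      ultimately show False using d by auto
    qed
  qed
  also have "\<dots> = (\<Sum>p\<in>Pr. yvec \<eta> x (enc p))"
  proof (rule sum.reindex[unfolded comp_def])
    show "inj_on enc Pr"
    proof (rule inj_onI)
      fix p q assume pq: "p \<in> Pr" "q \<in> Pr" "enc p = enc q"
      obtain b g b' g' where p: "p = (b, g)" and q: "q = (b', g')" by (cases p, cases q)
      have "b < ?E" "g < ?E" "b' < ?E" "g' < ?E" using PrE pq p q by auto
      moreover have "\<Psi> (sh \<eta> ` \<Phi> b \<union> \<Phi> g) = \<Psi> (sh \<eta> ` \<Phi> b' \<union> \<Phi> g')" using pq(3) p q unfolding enc_def by simp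
      ultimately have "b = b' \<and> g = g'" by (rule enc_inj)
      then show "p = q" using p q by simp
    qed
  qed
  also have "\<dots> = (\<Sum>p\<in>Pr. (\<lambda>(b, g). x b g) p)"
  proof (rule sum.cong[OF refl])
    fix p assume "p \<in> Pr"
    then obtain b g where "p = (b, g)" "b < ?E" "g < ?E" using PrE by (cases p) auto
    then show "yvec \<eta> x (enc p) = (\<lambda>(b, g). x b g) p" unfolding enc_def using yvec_enc by simp
  qed
  finally show ?thesis using L by simp
qed

end


lemma ucls_eq:
  assumes U: "is_ultrafilter U" and S: "{a. f a = g a} \<in> U"
  shows "ucls U f = ucls U g"
proof -
  have up: "\<And>A B. A \<in> U \<Longrightarrow> A \<subseteq> B \<Longrightarrow> B \<in> U" and int: "\<And>A B. A \<in> U \<Longrightarrow> B \<in> U \<Longrightarrow> A \<inter> B \<in> U"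
    using U unfolding is_ultrafilter_def by blast+
  have S': "{a. g a = f a} \<in> U" using S by (metis (mono_tags, lifting) Collect_cong)
  have *: "{a. f a = h a} \<in> U \<Longrightarrow> {a. f a = g a} \<in> U \<Longrightarrow> {a. g a = h a} \<in> U" for f g h :: "'a \<Rightarrow> int"
  proof -
    assume a: "{a. f a = h a} \<in> U" "{a. f a = g a} \<in> U"
    have "{a. f a = h a} \<inter> {a. f a = g a} \<in> U" using int a by blast
    moreover have "{a. f a = h a} \<inter> {a. f a = g a} \<subseteq> {a. g a = h a}" by auto
    ultimately show ?thesis using up by blast
  qed
  show ?thesis unfolding ucls_def using * S S' by blast
qed

theorem mainTheorem5:
  fixes U :: "'k::wellorder set set" and \<eta> :: 'k and x :: "'k \<Rightarrow> 'k \<Rightarrow> int"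
  assumes "inf_card_type TYPE('k)"
    and "is_ultrafilter U"
    and "superfine U"
    and "\<forall>b g. (oexp2 \<eta> \<le> b \<or> oexp2 \<eta> \<le> g) \<longrightarrow> x b g = 0"
  shows "dsum U x = Esum U (yvec \<eta> x)"
proof -
  obtain \<Phi> :: "'k \<Rightarrow> 'k set" where \<Phi>: "bij_betw \<Phi> UNIV {S. finite S}" "\<forall>a b. a < b \<longleftrightarrow> fl (\<Phi> a) (\<Phi> b)"
    using Phi_ex[OF assms(1)] by blast
  interpret PH \<Phi> using assms(1) \<Phi> by unfold_locales auto
  define w where "w = (\<lambda>e. \<Sum>(b, g)\<in>{(b, g). ojoin b g = e}. x b g)"
  have supp: "\<forall>b g. (\<Psi> {\<eta>} \<le> b \<or> \<Psi> {\<eta>} \<le> g) \<longrightarrow> x b g = 0" using assms(4) by (simp add: oexp2_eq)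
  have D: "Dset \<eta> \<subseteq> {a. fvec w a = fvec (yvec \<eta> x) a}"
  proof
    fix \<alpha> assume "\<alpha> \<in> Dset \<eta>"
    then obtain \<xi> a where xi: "\<xi> < oexp2 \<eta>"
      and al: "\<alpha> = oadd (oadd (omul (oexp2 (oadd \<eta> \<eta>)) a) (omul (oexp2 \<eta>) \<xi>)) \<xi>"
      unfolding Dset_def by blast
    have xi': "\<xi> < \<Psi> {\<eta>}" using xi by (simp add: oexp2_eq)
    have "\<alpha> = \<Psi> (sh (sh \<eta> \<eta>) ` \<Phi> a \<union> sh \<eta> ` \<Phi> \<xi> \<union> \<Phi> \<xi>)" using al alpha_eq[OF xi'] by simp
    then have "\<Phi> \<alpha> = sh (sh \<eta> \<eta>) ` \<Phi> a \<union> sh \<eta> ` \<Phi> \<xi> \<union> \<Phi> \<xi>" by simp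
    moreover have "\<Phi> \<xi> \<subseteq> {..<\<eta>}" using xi' low_iff by simp
    moreover have "sh (sh \<eta> \<eta>) ` \<Phi> a \<subseteq> {sh \<eta> \<eta>..}" using sh_ge by auto
    ultimately have "fvec w \<alpha> = fvec (yvec \<eta> x) \<alpha>"
      unfolding w_def by (intro key_sums[OF supp]) auto
    then show "\<alpha> \<in> {a. fvec w a = fvec (yvec \<eta> x) a}" by simp
  qed
  have "Dset \<eta> \<inter> cone \<eta> \<in> U" using assms(3) unfolding superfine_def by blast
  then have "{a. fvec w a = fvec (yvec \<eta> x) a} \<in> U"
    using assms(2) D unfolding is_ultrafilter_def by blast
  then have "ucls U (fvec w) = ucls U (fvec (yvec \<eta> x))" by (rule ucls_eq[OF assms(2)])
  then show ?thesis unfolding dsum_def Esum_def w_def .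
qed


end
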